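(* Let $f:\mathbb{R}^n\to\mathbb{R}$ be differentiable and strongly convex, and let $x^*$ be its unique minimizer. Let $(x^k)$ be the sequence generated by the Method of Ellipcenters (ME) described in the context, started from an arbitrary point. If the method does not stop, then $\lim_{k\to+\infty}x^k=x^*$.
   Context: $\langle\cdot,\cdot\rangle$ and $\|\cdot\|$ denote the Euclidean inner product and norm. A function $f:\mathbb{R}^n\to\mathbb{R}$ is strongly convex with constant $\mu>0$ if $f(tx+(1-t)y)\le tf(x)+(1-t)f(y)-\frac{\mu t(1-t)}{2}\|y-x\|^2$ for all $x,y\in\mathbb{R}^n$, $t\in[0,1]$. Method of Ellipcenters (ME): given an initial point $x^0$, at iteration $k$: (1) if $\nabla f(x^k)=0$, stop. (2) Otherwise let $t_k>0$ be the (unique) positive number with $f(x^k-t_k\nabla f(x^k))=f(x^k)$ and set $y^k=x^k-t_k\nabla f(x^k)$. (3) If $\nabla f(x^k)$ and $\nabla f(y^k)$ are linearly dependent, set $x^{k+1}=\frac12(x^k+y^k)$. Otherwise compute $\cos\theta_k=\frac{\langle x^k-y^k,-\nabla f(y^k)\rangle}{\|x^k-y^k\|\,\|\nabla f(y^k)\|}$, $\sin\theta_k=\sqrt{1-\cos^2\theta_k}$, $w^k=-\nabla f(y^k)+\frac{\langle x^k-y^k,\nabla f(y^k)\rangle}{\|x^k-y^k\|^2}(x^k-y^k)$, $d^k=\frac{w^k}{\|w^k\|}-\frac{\sin\theta_k}{2\cos\theta_k}\frac{x^k-y^k}{\|x^k-y^k\|}$, and let $x^{k+1}$ be a minimizer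 of $f$ over the semiline $\{\frac12(x^k+y^k)+v d^k: v\ge 0\}$ (this semiline is the set of centers of ellipses in the plane $x^k+\mathrm{span}\{\nabla f(x^k),\nabla f(y^k)\}$ passing through $x^k$ and $y^k$ and orthogonal to $\nabla f(x^k)$ at $x^k$ and to $\nabla f(y^k)$ at $y^k$). *)

theory Defs
  imports "HOL-Analysis.Analysis"
begin

definition strongly_convex_on_with :: "real \<Rightarrow> ('a::real_inner \<Rightarrow> real) \<Rightarrow> bool" where
  "strongly_convex_on_with mu f \<longleftrightarrow>
     (\<forall>x y t. 0 \<le> t \<and> t \<le> 1 \<longrightarrow>
        f (t *\<^sub>R x + (1 - t) *\<^sub>R y) \<le> t * f x + (1 - t) * f y - mu * t * (1 - t) / 2 * (norm (y - x))^2)"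

definition strongly_convex :: "('a::real_inner \<Rightarrow> real) \<Rightarrow> bool" where
  "strongly_convex f \<longleftrightarrow> (\<exists>mu>0. strongly_convex_on_with mu f)"

definition lin_dep2 :: "'a::real_vector \<Rightarrow> 'a \<Rightarrow> bool" where
  "lin_dep2 a b \<longleftrightarrow> (\<exists>u v. (u, v) \<noteq> (0, 0) \<and> u *\<^sub>R a + v *\<^sub>R b = 0)"

text \<open>One (non-stopping) iteration of the Method of Ellipcenters: given the current
  iterate xk with nonzero gradient, xk1 is a possible next iterate.
  g is the gradient of f.\<close>
definition me_step :: "('a::euclidean_space \<Rightarrow> real) \<Rightarrow> ('a \<Rightarrow> 'a) \<Rightarrow> 'a \<Rightarrow> 'a \<Rightarrow> bool" where
  "me_step f g xk xk1 \<longleftrightarrow>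
     g xk \<noteq> 0 \<and>
     (\<exists>t>0. f (xk - t *\<^sub>R g xk) = f xk \<and>
        (let y = xk - t *\<^sub>R g xk;
             m = (1/2) *\<^sub>R (xk + y)
         in if lin_dep2 (g xk) (g y) then xk1 = m
            else
              (let c = inner (xk - y) (- g y) / (norm (xk - y) * norm (g y));
                   s = sqrt (1 - c^2);
                   w = - g y + (inner (xk - y) (g y) / (norm (xk - y))^2) *\<^sub>R (xk - y);
                   d = (1 / norm w) *\<^sub>R w - (s / (2 * c)) *\<^sub>R ((1 / norm (xk - y)) *\<^sub>R (xk - y))
               in (\<exists>v\<ge>0. xk1 = m + v *\<^sub>R d) \<and> (\<forall>v\<ge>0. f xk1 \<le> f (m + v *\<^sub>R d)))))"

end

theory Submission
  imports Defs
begin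

lemma sc_convex:
  fixes f :: "'a::real_inner \<Rightarrow> real"
  assumes "strongly_convex_on_with mu f" "mu > 0" and that: "0 \<le> t" "t \<le> 1"
  shows "f (t *\<^sub>R a + (1 - t) *\<^sub>R b) \<le> t * f a + (1 - t) * f b"
proof -
  have "mu * t * (1 - t) / 2 * (norm (b - a))^2 \<ge> 0" using that assms(2) by simp
  moreover have "f (t *\<^sub>R a + (1 - t) *\<^sub>R b) \<le> t * f a + (1 - t) * f b - mu * t * (1 - t) / 2 * (norm (b - a))^2"
    using assms(1) that unfolding strongly_convex_on_with_def by blast
  ultimately show ?thesis by linarith
qed

lemma sc_mid:
  fixes f :: "'a::real_inner \<Rightarrow> real"
  assumes "strongly_convex_on_with mu f"
  shows "f ((1/2) *\<^sub>R (a + b)) \<le> (f a + f b) / 2 - mu / 8 * (norm (b - a))^2"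
proof -
  have "f ((1/2) *\<^sub>R a + (1 - 1/2) *\<^sub>R b) \<le> (1/2) * f a + (1 - 1/2) * f b - mu * (1/2) * (1 - 1/2) / 2 * (norm (b - a))^2"
    using assms unfolding strongly_convex_on_with_def by (smt (verit, best) field_sum_of_halves)
  thus ?thesis by (simp add: scaleR_right_distrib add_divide_distrib)
qed

lemma sc_level:
  fixes f :: "'a::real_inner \<Rightarrow> real"
  assumes "strongly_convex_on_with mu f" "\<And>z. f xs \<le> f z"
  shows "mu / 4 * (norm (z - xs))^2 \<le> f z - f xs"
proof -
  have "f ((1/2) *\<^sub>R (z + xs)) \<le> (f z + f xs) / 2 - mu / 8 * (norm (xs - z))^2"
    by (rule sc_mid[OF assms(1)])
  moreover have "f xs \<le> f ((1/2) *\<^sub>R (z + xs))" by (rule assms(2))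
  moreover have "norm (xs - z) = norm (z - xs)" by (rule norm_minus_commute)
  ultimately have "f xs \<le> (f z + f xs) / 2 - mu / 8 * (norm (z - xs))^2" by simp
  thus ?thesis by (simp add: field_simps)
qed

lemma tangent:
  fixes f :: "'a::real_inner \<Rightarrow> real"
  assumes sc: "strongly_convex_on_with mu f" "mu > 0"
    and grad: "(f has_derivative (\<lambda>h. inner gx h)) (at x)"
  shows "f x + inner gx (z - x) \<le> f z"
proof -
  define \<phi> where "\<phi> = (\<lambda>s::real. f (x + s *\<^sub>R (z - x)))"
  have cv: "convex_on UNIV \<phi>"
  proof (rule convex_onI)
    fix t :: real and a b assume t: "0 < t" "t < 1"
    have "x + ((1 - t) *\<^sub>R a + t *\<^sub>R b) *\<^sub>R (z - x) = (1 - t) *\<^sub>R (x + a *\<^sub>R (z - x)) + (1 - (1 - t)) *\<^sub>R (x + b *\<^sub>R (z - x))"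
      by (simp add: algebra_simps)
    moreover have "f ((1 - t) *\<^sub>R (x + a *\<^sub>R (z - x)) + (1 - (1 - t)) *\<^sub>R (x + b *\<^sub>R (z - x)))
       \<le> (1 - t) * f (x + a *\<^sub>R (z - x)) + (1 - (1 - t)) * f (x + b *\<^sub>R (z - x))"
      using sc_convex[OF sc, of "1-t" "x + a *\<^sub>R (z - x)" "x + b *\<^sub>R (z - x)"] t by simp
    ultimately show "\<phi> ((1 - t) *\<^sub>R a + t *\<^sub>R b) \<le> (1 - t) * \<phi> a + t * \<phi> b"
      unfolding \<phi>_def by simp
  qed simp
  have d: "(\<phi> has_field_derivative inner gx (z - x)) (at 0 within UNIV)"
  proof -
    have "((\<lambda>s::real. x + s *\<^sub>R (z - x)) has_derivative (\<lambda>s. s *\<^sub>R (z - x))) (at 0)"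
      by (auto intro!: derivative_eq_intros)
    from has_derivative_compose[OF this, of f "\<lambda>h. inner gx h"] grad
    have "(\<phi> has_derivative (\<lambda>s. inner gx (s *\<^sub>R (z - x)))) (at 0)"
      unfolding \<phi>_def by simp
    moreover have "(\<lambda>s. inner gx (s *\<^sub>R (z - x))) = (*) (inner gx (z - x))" by (auto simp: fun_eq_iff)
    ultimately show ?thesis unfolding has_field_derivative_def by simp
  qed
  have "\<phi> 1 - \<phi> 0 \<ge> inner gx (z - x) * (1 - 0)"
    by (rule convex_on_imp_above_tangent[OF cv]) (use d in auto)
  thus ?thesis unfolding \<phi>_def by simp
qed

lemma grad_cont:
  fixes f :: "'a::euclidean_space \<Rightarrow> real"
  assumes grad: "\<And>z. (f has_derivative (\<lambda>h. inner (g z) h)) (at z)"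
    and tan: "\<And>x z. f x + inner (g x) (z - x) \<le> f z"
  shows "isCont g z"
  unfolding continuous_at_eps_delta
proof (intro allI impI)
  fix e :: real assume e: "e > 0"
  define \<epsilon> where "\<epsilon> = e / 4"
  have \<epsilon>: "\<epsilon> > 0" using e by (simp add: \<epsilon>_def)
  obtain r0 where r0: "r0 > 0" and r0d: "\<And>y. norm (y - z) < r0 \<Longrightarrow>
      norm (f y - f z - inner (g z) (y - z)) \<le> \<epsilon> * norm (y - z)"
    using grad[of z] \<epsilon> unfolding has_derivative_at_alt by blast
  define r where "r = r0 / 2"
  have r: "r > 0" "r < r0" using r0 by (auto simp: r_def)
  have fc: "continuous_on (cball z (r + 1)) f"
    using has_derivative_continuous[OF grad] by (simp add: continuous_at_imp_continuous_on)
  have "uniformly_continuous_on (cball z (r + 1)) f"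
    by (rule compact_uniformly_continuous[OF fc compact_cball])
  then obtain d0 where d0: "d0 > 0" and d0u: "\<And>a b. a \<in> cball z (r + 1) \<Longrightarrow> b \<in> cball z (r + 1)
      \<Longrightarrow> dist b a < d0 \<Longrightarrow> dist (f b) (f a) < \<epsilon> * r"
  proof -
    have "\<epsilon> * r > 0" using \<epsilon> r by simp
    then have "\<exists>d>0. \<forall>a\<in>cball z (r + 1). \<forall>b\<in>cball z (r + 1). dist b a < d \<longrightarrow> dist (f b) (f a) < \<epsilon> * r"
      using \<open>uniformly_continuous_on (cball z (r + 1)) f\<close> unfolding uniformly_continuous_on_def by blast
    then show ?thesis using that by blast
  qed
  show "\<exists>d>0. \<forall>w. dist w z < d \<longrightarrow> dist (g w) (g z) < e"
  proof (intro exI[of _ "min d0 1"] conjI allI impI)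
    show "min d0 1 > 0" using d0 by simp
    fix w assume w: "dist w z < min d0 1"
    define v where "v = g w - g z"
    show "dist (g w) (g z) < e"
    proof (cases "v = 0")
      case True thus ?thesis using e by (simp add: v_def)
    next
      case False
      define h where "h = (r / norm v) *\<^sub>R v"
      have nh: "norm h = r" using False r by (simp add: h_def)
      have vh: "inner v h = r * norm v" using False
        by (simp add: h_def inner_commute power2_norm_eq_inner[symmetric] power2_eq_square)
      have "inner (g w) h \<le> f (w + h) - f w" using tan[of w "w + h"] by simp
      moreover have "f (z + h) - f z - inner (g z) h \<le> \<epsilon> * r"
      proof -
        have "norm (f (z + h) - f z - inner (g z) (z + h - z)) \<le> \<epsilon> * norm (z + h - z)"
          using r0d[of "z + h"] nh r by simp
        thus ?thesis using nh by (simp add: abs_le_iff)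
      qed
      moreover have "dist (f (w + h)) (f (z + h)) < \<epsilon> * r"
      proof (rule d0u)
        show "z + h \<in> cball z (r + 1)" using nh by (simp add: dist_norm)
        have "dist z (w + h) \<le> dist z w + norm h" 
          by (simp add: dist_norm) (metis diff_diff_eq norm_triangle_ineq4)
        thus "w + h \<in> cball z (r + 1)" using w nh by (simp add: dist_commute)
        show "dist (w + h) (z + h) < d0" using w by (simp add: dist_norm)
      qed
      moreover have "dist (f w) (f z) < \<epsilon> * r"
      proof (rule d0u)
        show "z \<in> cball z (r + 1)" using r by simp
        show "w \<in> cball z (r + 1)" using w r by (simp add: dist_commute)
        show "dist w z < d0" using w by simp
      qed
      ultimately have "r * norm v < 3 * (\<epsilon> * r)"
        using vh unfolding v_def dist_real_def inner_diff_left by auto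
      hence "norm v < 3 * \<epsilon>" using r by (simp add: mult.commute)
      thus ?thesis using e by (simp add: \<epsilon>_def dist_norm v_def)
    qed
  qed
qed

lemma step_mid:
  fixes f :: "'a::euclidean_space \<Rightarrow> real"
  assumes st: "me_step f g a b"
  shows "\<exists>t>0. f (a - t *\<^sub>R g a) = f a \<and> f b \<le> f ((1/2) *\<^sub>R (a + (a - t *\<^sub>R g a)))"
  using st unfolding me_step_def Let_def
  apply (elim conjE exE)
  subgoal for t
    apply (rule exI[of _ t])
    apply (simp split: if_splits)
    apply (elim conjE)
    apply (drule spec[of _ 0])
    apply simp
    done
  done

theorem theorem1:
  fixes f :: "'a::euclidean_space \<Rightarrow> real"
    and g :: "'a \<Rightarrow> 'a"
    and x :: "nat \<Rightarrow> 'a"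
    and xstar :: 'a
  assumes grad: "\<And>z. (f has_derivative (\<lambda>h. inner (g z) h)) (at z)"
    and sc: "strongly_convex f"
    and xstar_min: "\<And>z. f xstar \<le> f z"
    and iter: "\<And>k. me_step f g (x k) (x (Suc k))"
  shows "x \<longlonglongrightarrow> xstar"
proof -
  obtain mu where mu: "mu > 0" and scw: "strongly_convex_on_with mu f"
    using sc unfolding strongly_convex_def by blast
  have tan: "\<And>a b. f a + inner (g a) (b - a) \<le> f b"
    using tangent[OF scw mu grad] .
  have gc: "\<And>z. isCont g z" using grad_cont[OF grad tan] .
  have "\<forall>k. \<exists>t>0. f (x k - t *\<^sub>R g (x k)) = f (x k) \<and>
      f (x (Suc k)) \<le> f ((1/2) *\<^sub>R (x k + (x k - t *\<^sub>R g (x k))))"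
    using step_mid[OF iter] by blast
  then obtain t where t: "\<And>k. t k > 0" "\<And>k. f (x k - t k *\<^sub>R g (x k)) = f (x k)"
    "\<And>k. f (x (Suc k)) \<le> f ((1/2) *\<^sub>R (x k + (x k - t k *\<^sub>R g (x k))))"
    by metis
  define y where "y k = x k - t k *\<^sub>R g (x k)" for k
  have fy: "f (y k) = f (x k)" for k using t(2) by (simp add: y_def)
  have dec: "f (x (Suc k)) \<le> f (x k) - mu / 8 * (norm (y k - x k))^2" for k
    using t(3)[of k] sc_mid[OF scw, of "x k" "y k"] fy[of k] unfolding y_def[symmetric] by simp
  have decF: "decseq (\<lambda>k. f (x k))"
  proof (rule decseq_SucI)
    fix k have "mu / 8 * (norm (y k - x k))^2 \<ge> 0" using mu by simp
    thus "f (x (Suc k)) \<le> f (x k)" using dec[of k] by linarith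
  qed
  obtain L where FL: "(\<lambda>k. f (x k)) \<longlonglongrightarrow> L"
    using decseq_convergent[OF decF, of "f xstar"] xstar_min by blast
  have Fd: "(\<lambda>k. f (x k) - f (x (Suc k))) \<longlonglongrightarrow> 0"
  proof -
    have "(\<lambda>k. f (x (Suc k))) \<longlonglongrightarrow> L" using FL by (rule LIMSEQ_Suc)
    from tendsto_diff[OF FL this] show ?thesis by simp
  qed
  have D2: "(\<lambda>k. (norm (y k - x k))^2) \<longlonglongrightarrow> 0"
  proof (rule Lim_null_comparison)
    show "\<forall>\<^sub>F k in sequentially. norm ((norm (y k - x k))^2) \<le> 8 / mu * (f (x k) - f (x (Suc k)))"
    proof (rule always_eventually, rule allI)
      fix k
      have "mu * (norm (y k - x k))^2 \<le> 8 * (f (x k) - f (x (Suc k)))" using dec[of k] by simp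
      thus "norm ((norm (y k - x k))^2) \<le> 8 / mu * (f (x k) - f (x (Suc k)))"
        using mu by (simp add: field_simps)
    qed
    show "(\<lambda>k. 8 / mu * (f (x k) - f (x (Suc k)))) \<longlonglongrightarrow> 0"
      by (rule tendsto_mult_right_zero[OF Fd])
  qed
  have D: "(\<lambda>k. norm (y k - x k)) \<longlonglongrightarrow> 0"
    using tendsto_real_sqrt[OF D2] by simp
  define R where "R = sqrt (4 / mu * (f (x 0) - f xstar))"
  have inS: "z \<in> cball xstar R" if "f z \<le> f (x 0)" for z
  proof -
    have "mu / 4 * (norm (z - xstar))^2 \<le> f z - f xstar" by (rule sc_level[OF scw xstar_min])
    hence "(norm (z - xstar))^2 \<le> 4 / mu * (f (x 0) - f xstar)" using mu that by (simp add: field_simps)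
    hence "norm (z - xstar) \<le> R" unfolding R_def by (simp add: real_le_rsqrt)
    thus ?thesis by (simp add: dist_norm norm_minus_commute)
  qed
  have Fle: "f (x k) \<le> f (x 0)" for k using decF by (simp add: decseq_def)
  have xS: "x k \<in> cball xstar R" for k using inS Fle by blast
  have yS: "y k \<in> cball xstar R" for k using inS Fle fy by simp
  have uc: "uniformly_continuous_on (cball xstar R) g"
    by (rule compact_uniformly_continuous[OF _ compact_cball])
       (simp add: gc continuous_at_imp_continuous_on)
  have gdiff: "(\<lambda>k. g (x k) - g (y k)) \<longlonglongrightarrow> 0"
    unfolding LIMSEQ_iff
  proof (intro allI impI)
    fix e :: real assume e: "e > 0"
    then obtain d where d: "d > 0" and du: "\<forall>a\<in>cball xstar R. \<forall>b\<in>cball xstar R. dist b a < d \<longrightarrow> dist (g b) (g a) < e"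
      using uc unfolding uniformly_continuous_on_def by blast
    obtain N where N: "\<forall>k\<ge>N. norm (norm (y k - x k) - 0) < d"
      using D d unfolding LIMSEQ_iff by blast
    show "\<exists>N. \<forall>k\<ge>N. norm (g (x k) - g (y k) - 0) < e"
    proof (intro exI allI impI)
      fix k assume "k \<ge> N"
      hence "dist (x k) (y k) < d" using N by (simp add: dist_norm norm_minus_commute)
      thus "norm (g (x k) - g (y k) - 0) < e" using du xS yS by (simp add: dist_norm)
    qed
  qed
  have gbound: "norm (g (x k)) \<le> norm (g (x k) - g (y k))" for k
  proof -
    have "f (y k) + inner (g (y k)) (x k - y k) \<le> f (x k)" by (rule tan)
    hence "t k * inner (g (y k)) (g (x k)) \<le> 0" using fy[of k] by (simp add: y_def)
    hence neg: "inner (g (y k)) (g (x k)) \<le> 0" using t(1)[of k] by (simp add: mult_le_0_iff)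
    have "(norm (g (x k)))^2 = inner (g (x k) - g (y k)) (g (x k)) + inner (g (y k)) (g (x k))"
      by (simp add: power2_norm_eq_inner inner_diff_left)
    also have "\<dots> \<le> norm (g (x k) - g (y k)) * norm (g (x k))"
      using norm_cauchy_schwarz[of "g (x k) - g (y k)" "g (x k)"] neg by linarith
    finally have "norm (g (x k)) * norm (g (x k)) \<le> norm (g (x k) - g (y k)) * norm (g (x k))"
      by (simp add: power2_eq_square)
    thus ?thesis
      by (cases "norm (g (x k)) = 0") (auto simp: mult_le_cancel_right)
  qed
  have g0: "(\<lambda>k. norm (g (x k))) \<longlonglongrightarrow> 0"
    by (rule Lim_null_comparison[OF always_eventually tendsto_norm_zero[OF gdiff]])
       (simp add: gbound)
  have X2: "(\<lambda>k. (norm (x k - xstar))^2) \<longlonglongrightarrow> 0"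
  proof (rule Lim_null_comparison)
    show "\<forall>\<^sub>F k in sequentially. norm ((norm (x k - xstar))^2) \<le> 4 / mu * R * norm (g (x k))"
    proof (rule always_eventually, rule allI)
      fix k
      have a: "mu / 4 * (norm (x k - xstar))^2 \<le> f (x k) - f xstar" by (rule sc_level[OF scw xstar_min])
      have "f (x k) + inner (g (x k)) (xstar - x k) \<le> f xstar" by (rule tan)
      moreover have "- inner (g (x k)) (xstar - x k) \<le> norm (g (x k)) * norm (xstar - x k)"
        using norm_cauchy_schwarz[of "g (x k)" "x k - xstar"] by (simp add: inner_diff_right norm_minus_commute)
      moreover have "norm (xstar - x k) \<le> R" using xS[of k] by (simp add: dist_norm)
      moreover have "norm (g (x k)) * norm (xstar - x k) \<le> norm (g (x k)) * R"
        using calculation(3) by (simp add: mult_left_mono)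
      ultimately have "f (x k) - f xstar \<le> R * norm (g (x k))" by (simp add: mult.commute)
      with a have "mu / 4 * (norm (x k - xstar))^2 \<le> R * norm (g (x k))" by linarith
      thus "norm ((norm (x k - xstar))^2) \<le> 4 / mu * R * norm (g (x k))"
        using mu by (simp add: field_simps)
    qed
    show "(\<lambda>k. 4 / mu * R * norm (g (x k))) \<longlonglongrightarrow> 0"
      by (rule tendsto_mult_right_zero[OF g0])
  qed
  have "(\<lambda>k. norm (x k - xstar)) \<longlonglongrightarrow> 0"
    using tendsto_real_sqrt[OF X2] by simp
  hence "(\<lambda>k. x k - xstar) \<longlonglongrightarrow> 0" by (simp add: tendsto_norm_zero_iff)
  thus ?thesis by (simp add: Lim_null[symmetric])
qed

end
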